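(* Let $m\geq 2$ be an integer and let $\delta$ be a real number with $0\leq\delta\leq \frac{1}{4m}\left(1-\frac{2}{2^m-1}\right)$. Then there exists a sequence of binary $[[n_i,k_i,d_i]]$ stabilizer codes such that $\lim_{i\to\infty}n_i=\infty$, $$\liminf_{i\to\infty}\frac{k_i}{n_i}\geq R_m^{(1)}(\delta):=1-\frac{2}{2^m-1}-4m\delta,\qquad \liminf_{i\to\infty}\frac{d_i}{n_i}\geq\delta.$$
   Context: A binary $[[n,k,d]]$ stabilizer code is given by an $(n+k)$-dimensional subspace $C\subseteq\mathbf{F}_2^{2n}$ with $C^{\perp\mathrm s}\subseteq C$, where $\langle\vec x,\vec y\rangle_{\mathrm s}=\sum_{i=1}^n x_iy_{n+i}-\sum_{i=1}^n x_{n+i}y_i$ and $C^{\perp\mathrm s}$ is the orthogonal complement of $C$ with respect to this form; its minimum distance $d$ is $\min\{w(\vec x)\mid \vec x\in C\setminus C^{\perp\mathrm s}\}$ with $w(\vec x)=\#\{1\le i\le n\mid (x_i,x_{n+i})\neq(0,0)\}$. *)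

theory Defs
  imports "HOL-Analysis.Analysis" "HOL-Library.Z2" "HOL-Library.Function_Algebras"
begin

(* Vectors of F_2^{2n} are represented as functions nat => bit vanishing at indices >= 2n;
   index i < n is the coordinate x_{i+1}, index n+i is x_{n+i+1}. *)
type_synonym f2vec = "nat \<Rightarrow> bit"

definition f2space :: "nat \<Rightarrow> f2vec set" where
  "f2space N = {x. \<forall>i\<ge>N. x i = 0}"

definition f2scale :: "bit \<Rightarrow> f2vec \<Rightarrow> f2vec" where
  "f2scale c x = (\<lambda>i. c * x i)"

definition symp_form :: "nat \<Rightarrow> f2vec \<Rightarrow> f2vec \<Rightarrow> bit" where
  "symp_form n x y = (\<Sum>i<n. x i * y (n + i)) - (\<Sum>i<n. x (n + i) * y i)"

definition symp_perp :: "nat \<Rightarrow> f2vec set \<Rightarrow> f2vec set" where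
  "symp_perp n C = {y \<in> f2space (2 * n). \<forall>x\<in>C. symp_form n x y = 0}"

definition symp_weight :: "nat \<Rightarrow> f2vec \<Rightarrow> nat" where
  "symp_weight n x = card {i. i < n \<and> (x i, x (n + i)) \<noteq> (0, 0)}"

definition is_stabilizer_code :: "nat \<Rightarrow> nat \<Rightarrow> f2vec set \<Rightarrow> bool" where
  "is_stabilizer_code n k C \<longleftrightarrow>
     C \<subseteq> f2space (2 * n) \<and> module.subspace f2scale C \<and>
     vector_space.dim f2scale C = n + k \<and> symp_perp n C \<subseteq> C"

(* minimum distance: min weight over C \ C^{perp_s}; (Inf of the empty set of nat is 0) *)
definition stab_distance :: "nat \<Rightarrow> f2vec set \<Rightarrow> nat" where
  "stab_distance n C = Inf (symp_weight n ` (C - symp_perp n C))"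

definition is_stabilizer_code_nkd :: "nat \<Rightarrow> nat \<Rightarrow> nat \<Rightarrow> f2vec set \<Rightarrow> bool" where
  "is_stabilizer_code_nkd n k d C \<longleftrightarrow> is_stabilizer_code n k C \<and> d = stab_distance n C"

end

theory Submission
  imports Defs
begin

declare add_bit_eq_xor[simp del] mult_bit_eq_and[simp del]

lemma bit_cases2: "(x::bit) = 0 \<or> x = 1"
  by (cases x) auto

lemma bit_add_self[simp]: "(x::bit) + x = 0"
  by (cases x) auto

lemma f2vec_add_self[simp]: "(x::f2vec) + x = 0"
  by (simp add: fun_eq_iff)

lemma f2vec_add_cancel_left[simp]: "(x::f2vec) + (x + y) = y"
  by (simp add: add.assoc[symmetric])

lemma f2vec_minus_eq_plus: "(x::f2vec) - y = x + y"
  by (simp add: fun_eq_iff)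

interpretation f2: vector_space f2scale
  by unfold_locales (auto simp: f2scale_def algebra_simps fun_eq_iff)

lemma f2scale_0[simp]: "f2scale 0 x = 0" and f2scale_1[simp]: "f2scale 1 x = x"
  by (auto simp: f2scale_def fun_eq_iff)

lemma span_insert_f2:
  "f2.span (insert b B) = f2.span B \<union> (\<lambda>x. b + x) ` f2.span B"
proof safe
  fix x assume "x \<in> f2.span (insert b B)" "x \<notin> (\<lambda>x. b + x) ` f2.span B"
  then obtain k where k: "x - f2scale k b \<in> f2.span B" by (auto simp: f2.span_insert)
  show "x \<in> f2.span B"
  proof (cases "k = 0")
    case True then show ?thesis using k by simp
  next
    case False then have "k = 1" using bit_cases2 by blast
    then have "x + b \<in> f2.span B" using k by (simp add: f2vec_minus_eq_plus)
    moreover have "x = b + (x + b)" by (simp add: add.commute)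
    ultimately show ?thesis using \<open>x \<notin> _\<close> by blast
  qed
next
  fix x assume "x \<in> f2.span B" then show "x \<in> f2.span (insert b B)"
    by (meson f2.span_mono subsetD subset_insertI)
next
  fix x assume "x \<in> f2.span B"
  moreover have "(b + x) - f2scale 1 b = x" by simp
  ultimately show "b + x \<in> f2.span (insert b B)" unfolding f2.span_insert by (metis (mono_tags) mem_Collect_eq)
qed

lemma card_span_indep:
  assumes "finite B" "f2.independent B"
  shows "card (f2.span B) = 2 ^ card B"
  using assms
proof (induction B rule: finite_induct)
  case empty then show ?case by simp
next
  case (insert b B)
  then have indB: "f2.independent B" and nb: "b \<notin> f2.span B"
    by (auto simp: f2.independent_insert)
  have IH: "card (f2.span B) = 2 ^ card B" using insert indB by simp
  then have fin: "finite (f2.span B)" by (metis card.infinite power_not_zero zero_neq_numeral)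
  have disj: "f2.span B \<inter> (\<lambda>x. b + x) ` f2.span B = {}"
  proof safe
    fix x assume xa: "x \<in> f2.span B" and xb: "b + x \<in> f2.span B"
    have "(b + x) + x \<in> f2.span B" using f2.span_add[OF xb xa] .
    moreover have "(b + x) + x = b" by (metis add.assoc f2vec_add_self add.right_neutral)
    ultimately have "b \<in> f2.span B" by simp
    with nb show "b + x \<in> {}" by blast
  qed
  have "card ((\<lambda>x. b + x) ` f2.span B) = card (f2.span B)"
    by (rule card_image) (auto simp: inj_on_def)
  then have "card (f2.span (insert b B)) = 2 * card (f2.span B)"
    using card_Un_disjoint[OF fin finite_imageI[OF fin] disj] span_insert_f2 by simp
  then show ?case using IH insert by simp
qed

lemma card_subspace_dim:
  assumes "finite S" "f2.subspace S"
  shows "card S = 2 ^ f2.dim S"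
proof -
  obtain B where B: "B \<subseteq> S" "f2.independent B" "S \<subseteq> f2.span B" "card B = f2.dim S"
    by (rule f2.basis_exists)
  have "f2.span B = S" using B assms f2.span_subspace by blast
  moreover have "finite B" using B assms finite_subset by blast
  ultimately show ?thesis using card_span_indep B by metis
qed

definition f2sub :: "nat set \<Rightarrow> f2vec set" where
  "f2sub S = {x. \<forall>i. i \<notin> S \<longrightarrow> x i = 0}"

lemma f2space_eq: "f2space n = f2sub {..<n}"
  by (auto simp: f2space_def f2sub_def)

lemma f2sub_add: "x \<in> f2sub S \<Longrightarrow> y \<in> f2sub S \<Longrightarrow> x + y \<in> f2sub S"
  by (auto simp: f2sub_def)

lemma f2sub_0[simp]: "0 \<in> f2sub S"
  by (auto simp: f2sub_def)

lemma card_f2sub: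
  assumes "finite S" shows "card (f2sub S) = 2 ^ card S"
proof -
  have "bij_betw (\<lambda>x. {i\<in>S. x i = 1}) (f2sub S) (Pow S)"
  proof (rule bij_betw_byWitness[where f'="\<lambda>A i. if i \<in> A then 1 else 0"])
    show "\<forall>a\<in>f2sub S. (\<lambda>i. if i \<in> {i \<in> S. a i = 1} then 1 else 0) = a"
      by (auto simp: f2sub_def fun_eq_iff)
    show "\<forall>a'\<in>Pow S. {i \<in> S. (if i \<in> a' then 1 else 0) = (1::bit)} = a'" by auto
    show "(\<lambda>x. {i \<in> S. x i = 1}) ` f2sub S \<subseteq> Pow S" by auto
    show "(\<lambda>A i. if i \<in> A then 1 else 0) ` Pow S \<subseteq> f2sub S" by (auto simp: f2sub_def)
  qed
  then show ?thesis using bij_betw_same_card assms card_Pow by metis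
qed

lemma finite_f2sub: "finite S \<Longrightarrow> finite (f2sub S)"
  using card_f2sub by (metis card.infinite power_not_zero zero_neq_numeral)

definition wt :: "nat \<Rightarrow> f2vec \<Rightarrow> nat" where
  "wt n x = card {i. i < n \<and> x i \<noteq> 0}"

definition Vn :: "nat \<Rightarrow> nat \<Rightarrow> nat" where
  "Vn n d = card {x \<in> f2space n. wt n x < d}"

lemma card_wt_eq: "card {x \<in> f2space n. wt n x = w} = n choose w"
proof -
  have "bij_betw (\<lambda>x. {i. i < n \<and> x i \<noteq> 0}) {x \<in> f2space n. wt n x = w} {A. A \<subseteq> {..<n} \<and> card A = w}"
  proof (rule bij_betw_byWitness[where f'="\<lambda>A i. if i \<in> A then 1 else 0"])
    show "\<forall>a\<in>{x \<in> f2space n. wt n x = w}. (\<lambda>i. if i \<in> {i. i < n \<and> a i \<noteq> 0} then 1 else 0) = a"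
      by (auto simp: f2space_def fun_eq_iff)
    show "\<forall>a'\<in>{A. A \<subseteq> {..<n} \<and> card A = w}. {i. i < n \<and> (if i \<in> a' then 1 else 0) \<noteq> (0::bit)} = a'"
      by auto
    show "(\<lambda>x. {i. i < n \<and> x i \<noteq> 0}) ` {x \<in> f2space n. wt n x = w} \<subseteq> {A. A \<subseteq> {..<n} \<and> card A = w}"
      by (auto simp: wt_def)
    show "(\<lambda>A i. if i \<in> A then 1 else 0) ` {A. A \<subseteq> {..<n} \<and> card A = w} \<subseteq> {x \<in> f2space n. wt n x = w}"
    proof safe
      fix A assume A: "A \<subseteq> {..<n}" "w = card A"
      show "(\<lambda>i. if i \<in> A then 1 else 0) \<in> f2space n" using A by (auto simp: f2space_def)
      have "{i. i < n \<and> (if i \<in> A then 1 else 0) \<noteq> (0::bit)} = A" using A by auto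
      then show "wt n (\<lambda>i. if i \<in> A then 1 else 0) = card A" by (simp add: wt_def)
    qed
  qed
  then show ?thesis using bij_betw_same_card n_subsets[of "{..<n}" w] by fastforce
qed

lemma Vn_sum: "Vn n d = (\<Sum>w<d. n choose w)"
proof -
  have fin: "finite (f2space n)" by (simp add: f2space_eq finite_f2sub)
  have "{x \<in> f2space n. wt n x < d} = (\<Union>w\<in>{..<d}. {x \<in> f2space n. wt n x = w})" by auto
  then have "Vn n d = card (\<Union>w\<in>{..<d}. {x \<in> f2space n. wt n x = w})" by (simp add: Vn_def)
  also have "\<dots> = (\<Sum>w<d. card {x \<in> f2space n. wt n x = w})"
    by (rule card_UN_disjoint) (auto intro: finite_subset[OF _ fin])
  finally show ?thesis by (simp add: card_wt_eq)
qed

lemma Vn_bound: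
  assumes "1 \<le> d" "d \<le> n"
  shows "real (Vn n d) \<le> exp (real d) * (real n / real d) ^ d"
proof -
  define x where "x = real d / real n"
  have x0: "0 < x" and x1: "x \<le> 1" using assms by (auto simp: x_def)
  have "real (Vn n d) = (\<Sum>w<d. real (n choose w))" by (simp add: Vn_sum)
  also have "\<dots> \<le> (\<Sum>w<d. real (n choose w) * x ^ w / x ^ d)"
  proof (rule sum_mono)
    fix w assume "w \<in> {..<d}"
    then have "x ^ d \<le> x ^ w" using x0 x1 by (intro power_decreasing) auto
    then have "1 \<le> x ^ w / x ^ d" using x0 by simp
    then show "real (n choose w) \<le> real (n choose w) * x ^ w / x ^ d"
      by (metis mult_le_cancel_left1 of_nat_0_le_iff times_divide_eq_right linorder_not_le order_less_le_trans)
  qed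
  also have "\<dots> \<le> (\<Sum>w\<le>n. real (n choose w) * x ^ w / x ^ d)"
    using assms x0 by (intro sum_mono2) auto
  also have "\<dots> = (\<Sum>w\<le>n. real (n choose w) * x ^ w * 1 ^ (n - w)) / x ^ d"
    by (simp add: sum_divide_distrib)
  also have "\<dots> = (x + 1) ^ n / x ^ d" by (simp add: binomial_ring)
  also have "\<dots> \<le> exp x ^ n / x ^ d"
    using x0 by (intro divide_right_mono power_mono) (auto simp: add.commute exp_ge_add_one_self)
  also have "exp x ^ n = exp (real d)"
    using assms by (simp add: exp_of_nat_mult[symmetric] x_def)
  also have "1 / x ^ d = (real n / real d) ^ d" by (simp add: x_def power_divide)
  then have "exp (real d) / x ^ d = exp (real d) * (real n / real d) ^ d"
    by (metis times_divide_eq_right mult.right_neutral)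
  finally show ?thesis .
qed

definition ev :: "nat \<Rightarrow> f2vec" where "ev i = (\<lambda>j. if j = i then 1 else 0)"
definition dot :: "nat \<Rightarrow> f2vec \<Rightarrow> f2vec \<Rightarrow> bit" where "dot n x y = (\<Sum>i<n. x i * y i)"
definition Gv :: "nat \<Rightarrow> (nat \<Rightarrow> f2vec) \<Rightarrow> nat \<Rightarrow> f2vec" where
  "Gv r g j = (if j < r then ev j + g j else g j)"
definition enc :: "nat \<Rightarrow> nat \<Rightarrow> (nat \<Rightarrow> f2vec) \<Rightarrow> f2vec \<Rightarrow> f2vec" where
  "enc r a g m = (\<lambda>i. \<Sum>j<a. m j * Gv r g j i)"
definition Aset :: "nat \<Rightarrow> nat \<Rightarrow> (nat \<Rightarrow> f2vec) \<Rightarrow> f2vec set" where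
  "Aset r a g = enc r a g ` f2space a"
definition Bset :: "nat \<Rightarrow> nat \<Rightarrow> (nat \<Rightarrow> f2vec) \<Rightarrow> f2vec set" where
  "Bset n r g = {z \<in> f2space n. \<forall>j<r. z j = dot n z (g j)}"
definition xp :: "nat \<Rightarrow> f2vec \<Rightarrow> f2vec" where "xp n v = (\<lambda>i. if i < n then v i else 0)"
definition zp :: "nat \<Rightarrow> f2vec \<Rightarrow> f2vec" where "zp n v = (\<lambda>i. if i < n then v (n + i) else 0)"
definition join :: "nat \<Rightarrow> f2vec \<Rightarrow> f2vec \<Rightarrow> f2vec" where
  "join n x z = (\<lambda>i. if i < n then x i else if i < 2 * n then z (i - n) else 0)"
definition Ccode :: "nat \<Rightarrow> nat \<Rightarrow> nat \<Rightarrow> (nat \<Rightarrow> f2vec) \<Rightarrow> f2vec set" where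
  "Ccode n r a g = {v \<in> f2space (2 * n). xp n v \<in> Aset r a g \<and> zp n v \<in> Bset n r g}"
definition gspace :: "nat \<Rightarrow> nat \<Rightarrow> nat \<Rightarrow> (nat \<Rightarrow> f2vec) set" where
  "gspace n r a = PiE {..<a} (\<lambda>j. if j < r then f2sub {r..<n} else f2space n)"
definition good :: "nat \<Rightarrow> nat \<Rightarrow> nat \<Rightarrow> nat \<Rightarrow> (nat \<Rightarrow> f2vec) \<Rightarrow> bool" where
  "good n r a d g \<longleftrightarrow> (\<forall>m\<in>f2space a. m \<noteq> 0 \<longrightarrow> d \<le> wt n (enc r a g m)) \<and>
                      (\<forall>z\<in>Bset n r g. z \<noteq> 0 \<longrightarrow> d \<le> wt n z)"

lemma sum_if_less:
  assumes "r \<le> (a::nat)" shows "(\<Sum>j<a. if j < r then f j else 0) = (\<Sum>j<r. f j)"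
proof -
  have "(\<Sum>j<a. if j < r then f j else 0) = (\<Sum>j\<in>{..<a} \<inter> {j. j < r}. f j)"
    by (simp add: sum.If_cases)
  also have "{..<a} \<inter> {j. j < r} = {..<r}" using assms by auto
  finally show ?thesis .
qed

lemma sum_delta_bit:
  "i < (n::nat) \<Longrightarrow> (\<Sum>k<n. (if k = i then 1 else 0) * (f k :: bit)) = f i"
proof -
  assume "i < n"
  have "(\<Sum>k<n. (if k = i then 1 else 0) * (f k :: bit)) = (\<Sum>k<n. if k = i then f k else 0)"
    by (rule sum.cong) auto
  also have "\<dots> = f i" using \<open>i < n\<close> by (subst sum.delta) auto
  finally show ?thesis .
qed

lemma dot_add_left: "dot n (x + y) z = dot n x z + dot n y z"
  by (simp add: dot_def algebra_simps sum.distrib)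

lemma dot_comm: "dot n x y = dot n y x"
  by (simp add: dot_def mult.commute)

lemma dot_zero_left[simp]: "dot n 0 z = 0"
  by (simp add: dot_def)

lemma f2space_add: "x \<in> f2space n \<Longrightarrow> y \<in> f2space n \<Longrightarrow> x + y \<in> f2space n"
  by (auto simp: f2space_def)

lemma zero_f2space[simp]: "0 \<in> f2space n"
  by (auto simp: f2space_def)

lemma finite_f2space: "finite (f2space n)"
  by (simp add: f2space_eq finite_f2sub)

lemma card_f2space: "card (f2space n) = 2 ^ n"
  by (simp add: f2space_eq card_f2sub)

locale cs =
  fixes n r a :: nat and g :: "nat \<Rightarrow> f2vec"
  assumes ra: "r \<le> a" and an: "a \<le> n" and gsp: "g \<in> gspace n r a"
begin

lemma g_in: "j < a \<Longrightarrow> g j \<in> (if j < r then f2sub {r..<n} else f2space n)"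
  using gsp by (auto simp: gspace_def PiE_iff)

lemma g_left: "j < r \<Longrightarrow> i < r \<Longrightarrow> g j i = 0"
proof -
  assume "j < r" "i < r"
  then have "g j \<in> f2sub {r..<n}" using g_in[of j] ra by auto
  then show ?thesis using \<open>i < r\<close> by (auto simp: f2sub_def)
qed

lemma g_high: "j < a \<Longrightarrow> n \<le> i \<Longrightarrow> g j i = 0"
proof -
  assume "j < a" "n \<le> i"
  then show ?thesis using g_in[of j] by (auto simp: f2sub_def f2space_def split: if_splits)
qed

lemma enc_apply: "enc r a g m i = (if i < r then m i else 0) + (\<Sum>j<a. m j * g j i)"
proof -
  have "\<And>j. m j * Gv r g j i = (if j < r then m j * ev j i else 0) + m j * g j i"
    by (auto simp: Gv_def algebra_simps)
  then have "enc r a g m i = (\<Sum>j<a. (if j < r then m j * ev j i else 0) + m j * g j i)"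
    by (simp add: enc_def)
  also have "\<dots> = (\<Sum>j<a. if j < r then m j * ev j i else 0) + (\<Sum>j<a. m j * g j i)"
    by (simp add: sum.distrib)
  also have "(\<Sum>j<a. if j < r then m j * ev j i else 0) = (\<Sum>j<r. m j * ev j i)"
    using ra by (rule sum_if_less)
  also have "\<dots> = (if i < r then m i else 0)"
    by (simp add: ev_def if_distrib[where f="\<lambda>x. _ * x"] sum.delta cong: if_cong)
  finally show ?thesis .
qed

lemma enc_add: "enc r a g (m + m') = enc r a g m + enc r a g m'"
  by (simp add: enc_def fun_eq_iff algebra_simps sum.distrib)

lemma enc_zero[simp]: "enc r a g 0 = 0"
  by (simp add: enc_def fun_eq_iff)

lemma enc_space: "enc r a g m \<in> f2space n"
  using ra an g_high by (auto simp: f2space_def enc_apply)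

lemma enc_ev: "j < a \<Longrightarrow> enc r a g (ev j) = Gv r g j"
  by (simp add: enc_def fun_eq_iff ev_def if_distrib[where f="\<lambda>x. x * _"] sum.delta cong: if_cong)

definition bv :: "f2vec \<Rightarrow> f2vec" where
  "bv y = y + (\<lambda>k. if k < r then dot n y (g k) else 0)"

lemma dot_bv: "j < r \<Longrightarrow> dot n (bv y) (g j) = dot n y (g j)"
proof -
  assume j: "j < r"
  have "dot n (bv y) (g j) = dot n y (g j) + (\<Sum>i<n. (if i < r then dot n y (g i) else 0) * g j i)"
    by (simp add: bv_def dot_def algebra_simps sum.distrib)
  also have "(\<Sum>i<n. (if i < r then dot n y (g i) else 0) * g j i) = 0"
    using g_left[OF j] by (intro sum.neutral) auto
  finally show ?thesis by simp
qed

lemma bv_in_B: assumes "y \<in> f2sub {r..<n}" shows "bv y \<in> Bset n r g"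
proof -
  have "bv y \<in> f2space n" using assms ra an by (auto simp: bv_def f2sub_def f2space_def)
  moreover have "bv y j = dot n (bv y) (g j)" if "j < r" for j
  proof -
    have "bv y j = dot n y (g j)" using that assms by (simp add: bv_def f2sub_def)
    then show ?thesis using dot_bv[OF that] by simp
  qed
  ultimately show ?thesis by (simp add: Bset_def)
qed

lemma ortho_B:
  assumes x: "x \<in> f2space n" and orth: "\<forall>z\<in>Bset n r g. dot n z x = 0"
  shows "x = enc r a g (\<lambda>j. if j < r then x j else 0)"
proof (rule ext)
  fix i
  let ?m = "\<lambda>j. if j < r then x j else 0"
  have encm: "enc r a g ?m i = (if i < r then x i else 0) + (\<Sum>j<r. x j * g j i)"
    using ra by (simp add: enc_apply if_distrib[where f="\<lambda>x. x * _"] sum_if_less cong: if_cong)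
  show "x i = enc r a g ?m i"
  proof (cases "i < r")
    case True then show ?thesis using encm g_left by simp
  next
    case False
    show ?thesis
    proof (cases "i < n")
      case False then show ?thesis
        using x enc_space[of ?m] by (auto simp: f2space_def)
    next
      case True
      have evs: "ev i \<in> f2sub {r..<n}" using True \<open>\<not> i < r\<close> by (auto simp: ev_def f2sub_def)
      have dk: "dot n (ev i) v = v i" for v
        using True unfolding dot_def ev_def by (rule sum_delta_bit)
      have "dot n (bv (ev i)) x = 0" using orth bv_in_B[OF evs] by blast
      moreover note dk
      moreover have "(\<lambda>k. if k < r then dot n (ev i) (g k) else 0) = (\<lambda>k. if k < r then g k i else 0)"
        by (rule ext) (simp only: dk)
      moreover have "dot n (\<lambda>k. if k < r then g k i else 0) x = (\<Sum>j<r. x j * g j i)"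
      proof -
        have "dot n (\<lambda>k. if k < r then g k i else 0) x = (\<Sum>j<n. if j < r then x j * g j i else 0)"
          unfolding dot_def by (rule sum.cong) (auto simp: mult.commute)
        also have "\<dots> = (\<Sum>j<r. x j * g j i)" using ra an by (intro sum_if_less) simp
        finally show ?thesis .
      qed
      ultimately have "x i + (\<Sum>j<r. x j * g j i) = 0"
        by (simp add: bv_def dot_add_left)
      then have "x i = (\<Sum>j<r. x j * g j i)"
        by (metis add.right_neutral add.assoc bit_add_self)
      then show ?thesis using encm \<open>\<not> i < r\<close> by simp
    qed
  qed
qed

end

lemma bit_minus: "(x::bit) - y = x + y"
  by (cases x; cases y) auto

lemma bit_sum0: "(x::bit) + y = 0 \<Longrightarrow> x = y"
  by (cases x; cases y) auto

lemma f2vec_sum0: "(m::f2vec) + m' = 0 \<Longrightarrow> m = m'"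
  by (metis add.assoc add.left_neutral f2vec_add_self)

lemma xp_add: "xp n (u + v) = xp n u + xp n v" by (auto simp: xp_def fun_eq_iff)
lemma zp_add: "zp n (u + v) = zp n u + zp n v" by (auto simp: zp_def fun_eq_iff)
lemma xp_zero[simp]: "xp n 0 = 0" by (auto simp: xp_def fun_eq_iff)
lemma zp_zero[simp]: "zp n 0 = 0" by (auto simp: zp_def fun_eq_iff)

lemma xp_space: "xp n v \<in> f2space n" by (auto simp: xp_def f2space_def)
lemma zp_space: "zp n v \<in> f2space n" by (auto simp: zp_def f2space_def)

lemma xp_join: "x \<in> f2space n \<Longrightarrow> xp n (join n x z) = x"
  by (auto simp: xp_def join_def fun_eq_iff f2space_def)
lemma zp_join: "z \<in> f2space n \<Longrightarrow> zp n (join n x z) = z"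
  by (auto simp: zp_def join_def fun_eq_iff f2space_def)
lemma join_space: "join n x z \<in> f2space (2 * n)"
  by (auto simp: join_def f2space_def)
lemma join_xp_zp: "v \<in> f2space (2 * n) \<Longrightarrow> join n (xp n v) (zp n v) = v"
  by (auto simp: xp_def zp_def join_def fun_eq_iff f2space_def)

lemma symp_form_eq: "symp_form n u v = dot n (xp n u) (zp n v) + dot n (zp n u) (xp n v)"
proof -
  have "(\<Sum>i<n. u i * v (n + i)) = dot n (xp n u) (zp n v)"
    unfolding dot_def xp_def zp_def by (rule sum.cong) auto
  moreover have "(\<Sum>i<n. u (n + i) * v i) = dot n (zp n u) (xp n v)"
    unfolding dot_def xp_def zp_def by (rule sum.cong) auto
  ultimately show ?thesis by (simp add: symp_form_def bit_minus)
qed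

lemma dot_zero_right[simp]: "dot n x 0 = 0" by (simp add: dot_def)

context cs
begin

abbreviation "CC \<equiv> Ccode n r a g"
abbreviation "AA \<equiv> Aset r a g"
abbreviation "BB \<equiv> Bset n r g"

lemma A_sub: "AA \<subseteq> f2space n" using enc_space by (auto simp: Aset_def)
lemma A_add: "x \<in> AA \<Longrightarrow> y \<in> AA \<Longrightarrow> x + y \<in> AA"
  by (auto simp: Aset_def enc_add[symmetric] intro!: imageI f2space_add)
lemma A_0: "0 \<in> AA"
  using zero_f2space enc_zero unfolding Aset_def by (metis image_eqI)
lemma B_add: "x \<in> BB \<Longrightarrow> y \<in> BB \<Longrightarrow> x + y \<in> BB"
  by (auto simp: Bset_def f2space_add dot_add_left)
lemma B_0: "0 \<in> BB" by (simp add: Bset_def)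
lemma B_sub: "BB \<subseteq> f2space n" by (auto simp: Bset_def)

lemma Gv_in_A: "j < a \<Longrightarrow> Gv r g j \<in> AA"
proof -
  assume "j < a"
  then have "ev j \<in> f2space a" by (auto simp: ev_def f2space_def)
  then show ?thesis using enc_ev[OF \<open>j < a\<close>] unfolding Aset_def by (metis image_eqI)
qed

lemma C_sub: "CC \<subseteq> f2space (2 * n)" by (auto simp: Ccode_def)
lemma finite_C: "finite CC" using C_sub finite_f2space finite_subset by blast

lemma C_subspace: "f2.subspace CC"
  unfolding f2.subspace_def
proof safe
  show "0 \<in> CC" using A_0 B_0 by (simp add: Ccode_def)
next
  fix x y assume "x \<in> CC" "y \<in> CC"
  then show "x + y \<in> CC"
    by (auto simp: Ccode_def xp_add zp_add f2space_add intro: A_add B_add)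
next
  fix c :: bit and x assume "x \<in> CC"
  then show "f2scale c x \<in> CC"
    using bit_cases2[of c] A_0 B_0 by (cases "c = 0") (auto simp: Ccode_def)
qed

lemma perp_xp: assumes "v \<in> symp_perp n CC" shows "\<forall>z\<in>BB. dot n z (xp n v) = 0"
proof
  fix z assume z: "z \<in> BB"
  have "join n 0 z \<in> CC"
    using z B_sub A_0 by (auto simp: Ccode_def xp_join zp_join join_space)
  then have "symp_form n (join n 0 z) v = 0" using assms by (auto simp: symp_perp_def)
  then show "dot n z (xp n v) = 0"
    using z B_sub by (auto simp: symp_form_eq xp_join zp_join)
qed

lemma perp_sub: "symp_perp n CC \<subseteq> CC"
proof
  fix v assume v: "v \<in> symp_perp n CC"
  then have v2: "v \<in> f2space (2 * n)" by (simp add: symp_perp_def)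
  have "xp n v = enc r a g (\<lambda>j. if j < r then xp n v j else 0)"
    using ortho_B[OF xp_space perp_xp[OF v]] .
  moreover have "(\<lambda>j. if j < r then xp n v j else 0) \<in> f2space a"
    using ra by (auto simp: f2space_def)
  ultimately have xA: "xp n v \<in> AA" unfolding Aset_def by (rule image_eqI)
  have "zp n v j = dot n (zp n v) (g j)" if j: "j < r" for j
  proof -
    have ja: "j < a" using j ra by simp
    have "join n (Gv r g j) 0 \<in> CC"
      using Gv_in_A[OF ja] A_sub B_0 by (auto simp: Ccode_def xp_join zp_join join_space)
    then have "symp_form n (join n (Gv r g j) 0) v = 0" using v by (auto simp: symp_perp_def)
    then have "dot n (Gv r g j) (zp n v) = 0"
      using Gv_in_A[OF ja] A_sub by (auto simp: symp_form_eq xp_join zp_join)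
    moreover have "dot n (ev j) (zp n v) = zp n v j"
      using j ra an unfolding dot_def ev_def by (intro sum_delta_bit) simp
    ultimately have "zp n v j + dot n (g j) (zp n v) = 0"
      using j by (simp add: Gv_def dot_add_left)
    then show ?thesis using bit_sum0 dot_comm by metis
  qed
  then have "zp n v \<in> BB" by (simp add: Bset_def zp_space)
  with xA v2 show "v \<in> CC" by (simp add: Ccode_def)
qed

end

context cs
begin

lemma zero_perp: "0 \<in> symp_perp n CC"
  by (simp add: symp_perp_def symp_form_eq)

lemma symp_weight_ge_xp: "wt n (xp n v) \<le> symp_weight n v"
  unfolding wt_def symp_weight_def by (rule card_mono) (auto simp: xp_def)

lemma symp_weight_ge_zp: "wt n (zp n v) \<le> symp_weight n v"
  unfolding wt_def symp_weight_def by (rule card_mono) (auto simp: zp_def)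

lemma wt_zero[simp]: "wt n 0 = 0" by (simp add: wt_def)

lemma xp_zp_zero: "v \<in> f2space (2 * n) \<Longrightarrow> xp n v = 0 \<Longrightarrow> zp n v = 0 \<Longrightarrow> v = 0"
proof -
  assume "v \<in> f2space (2 * n)" "xp n v = 0" "zp n v = 0"
  moreover have "join n 0 0 = 0" by (simp add: join_def fun_eq_iff)
  ultimately show "v = 0" using join_xp_zp[of v n] by metis
qed

lemma enc_inj:
  assumes gd: "good n r a d g" and d: "1 \<le> d"
  shows "inj_on (enc r a g) (f2space a)"
proof (rule inj_onI)
  fix m m' assume m: "m \<in> f2space a" "m' \<in> f2space a" "enc r a g m = enc r a g m'"
  then have "enc r a g (m + m') = 0" by (simp add: enc_add)
  moreover have "m + m' \<in> f2space a" using m f2space_add by blast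
  ultimately have "m + m' = 0" using gd d by (force simp: good_def)
  then show "m = m'" by (rule f2vec_sum0)
qed

lemma dist_bound:
  assumes gd: "good n r a d g" and d: "1 \<le> d" and rlta: "r < a"
  shows "d \<le> stab_distance n CC"
  unfolding stab_distance_def
proof (rule cInf_greatest)
  let ?v0 = "join n (Gv r g r) 0"
  have Gr: "Gv r g r \<in> AA" using Gv_in_A rlta by blast
  have v0C: "?v0 \<in> CC"
    using Gr A_sub B_0 by (auto simp: Ccode_def xp_join zp_join join_space)
  have "?v0 \<notin> symp_perp n CC"
  proof
    assume p: "?v0 \<in> symp_perp n CC"
    define m0 where "m0 = (\<lambda>j. if j < r then Gv r g r j else 0)"
    have xj: "xp n ?v0 = Gv r g r" using Gr A_sub by (intro xp_join) blast
    have "Gv r g r = enc r a g m0"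
      using ortho_B[OF xp_space perp_xp[OF p]] unfolding xj m0_def .
    moreover have "Gv r g r = enc r a g (ev r)" using enc_ev rlta by simp
    ultimately have "enc r a g (ev r + m0) = 0" by (simp add: enc_add)
    moreover have "ev r + m0 \<in> f2space a" using rlta ra by (auto simp: f2space_def ev_def m0_def)
    moreover have "ev r + m0 \<noteq> 0"
    proof
      assume "ev r + m0 = 0"
      then have "ev r r + m0 r = 0" by (metis plus_fun_apply zero_fun_apply)
      then show False by (simp add: ev_def m0_def)
    qed
    ultimately show False using gd d by (force simp: good_def)
  qed
  then show "symp_weight n ` (CC - symp_perp n CC) \<noteq> {}" using v0C by blast
next
  fix w assume "w \<in> symp_weight n ` (CC - symp_perp n CC)"
  then obtain v where v: "v \<in> CC" "v \<notin> symp_perp n CC" and w: "w = symp_weight n v" by blast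
  have "v \<noteq> 0" using v zero_perp by blast
  then have "xp n v \<noteq> 0 \<or> zp n v \<noteq> 0" using xp_zp_zero v C_sub by blast
  then show "d \<le> w"
  proof
    assume nz: "xp n v \<noteq> 0"
    from v have "xp n v \<in> AA" by (simp add: Ccode_def)
    then obtain m where m: "m \<in> f2space a" "xp n v = enc r a g m" by (auto simp: Aset_def)
    with nz have "m \<noteq> 0" by auto
    then have "d \<le> wt n (xp n v)" using gd m by (simp add: good_def)
    then show ?thesis using symp_weight_ge_xp w by (meson le_trans)
  next
    assume nz: "zp n v \<noteq> 0"
    from v have "zp n v \<in> BB" by (simp add: Ccode_def)
    then have "d \<le> wt n (zp n v)" using gd nz by (simp add: good_def)
    then show ?thesis using symp_weight_ge_zp w by (meson le_trans)
  qed
qed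

lemma bv_inj: "inj_on bv (f2sub {r..<n})"
proof (rule inj_onI)
  fix y y' assume y: "y \<in> f2sub {r..<n}" "y' \<in> f2sub {r..<n}" "bv y = bv y'"
  show "y = y'"
  proof
    fix i
    show "y i = y' i"
    proof (cases "i < r")
      case True then show ?thesis using y by (auto simp: f2sub_def)
    next
      case False
      have "bv y i = bv y' i" using y by simp
      then show ?thesis using False by (simp add: bv_def)
    qed
  qed
qed

lemma card_C:
  assumes gd: "good n r a d g" and d: "1 \<le> d"
  shows "2 ^ (a + (n - r)) \<le> card CC"
proof -
  have finA: "finite AA" using A_sub finite_f2space finite_subset by blast
  have finB: "finite BB" using B_sub finite_f2space finite_subset by blast
  have cA: "card AA = 2 ^ a"
    unfolding Aset_def using card_image[OF enc_inj[OF gd d]] card_f2space by simp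
  have "card (bv ` f2sub {r..<n}) = 2 ^ (n - r)"
    using card_image[OF bv_inj] card_f2sub[of "{r..<n}"] by simp
  moreover have "bv ` f2sub {r..<n} \<subseteq> BB" using bv_in_B by blast
  ultimately have cB: "2 ^ (n - r) \<le> card BB" using card_mono[OF finB] by metis
  have "bij_betw (\<lambda>v. (xp n v, zp n v)) CC (AA \<times> BB)"
  proof (rule bij_betw_byWitness[where f'="\<lambda>(x, z). join n x z"])
    show "\<forall>v\<in>CC. (case (xp n v, zp n v) of (x, z) \<Rightarrow> join n x z) = v"
      using C_sub join_xp_zp by auto
    show "\<forall>p\<in>AA \<times> BB. (\<lambda>v. (xp n v, zp n v)) (case p of (x, z) \<Rightarrow> join n x z) = p"
      using A_sub B_sub by (auto simp: xp_join zp_join)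
    show "(\<lambda>v. (xp n v, zp n v)) ` CC \<subseteq> AA \<times> BB" by (auto simp: Ccode_def)
    show "(\<lambda>(x, z). join n x z) ` (AA \<times> BB) \<subseteq> CC"
      using A_sub B_sub by (auto simp: Ccode_def xp_join zp_join join_space)
  qed
  then have "card CC = card AA * card BB" using bij_betw_same_card card_cartesian_product by metis
  then show ?thesis using cA cB by (simp add: power_add)
qed

lemma code_ok:
  assumes gd: "good n r a d g" and d: "1 \<le> d" and rlta: "r < a"
  shows "is_stabilizer_code n (vector_space.dim f2scale CC - n) CC \<and>
         d \<le> stab_distance n CC \<and> n + (a - r) \<le> vector_space.dim f2scale CC"
proof -
  have "card CC = 2 ^ f2.dim CC" using card_subspace_dim finite_C C_subspace by blast
  then have "2 ^ (a + (n - r)) \<le> (2::nat) ^ f2.dim CC" using card_C[OF gd d] by simp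
  then have dimge: "a + (n - r) \<le> f2.dim CC" by (simp add: power_le_imp_le_exp)
  then have dimge': "n + (a - r) \<le> f2.dim CC" using ra an by linarith
  have "module.subspace f2scale CC" using C_subspace by simp
  then show ?thesis
    using C_sub perp_sub dimge' dist_bound[OF gd d rlta]
    by (simp add: is_stabilizer_code_def)
qed

end

lemma involution_bij:
  assumes "\<forall>x\<in>S. f x \<in> S" "\<forall>x\<in>S. f (f x) = x"
  shows "bij_betw f S S"
  using assms by (intro bij_betw_byWitness[where f'=f]) auto

lemma card_filter_sum: "finite A \<Longrightarrow> card {x\<in>A. Q x} = (\<Sum>x\<in>A. if Q x then 1 else 0)"
  by (simp add: sum.inter_filter[symmetric])

lemma card_translate:
  assumes T: "\<forall>x\<in>T. \<forall>y\<in>T. x + y \<in> T" and u: "(u::f2vec) \<in> T"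
  shows "card {t\<in>T. P (u + t)} = card {t\<in>T. P t}"
proof -
  have "bij_betw (\<lambda>t. u + t) {t\<in>T. P (u + t)} {t\<in>T. P t}"
  proof (rule bij_betw_byWitness[where f'="\<lambda>t. u + t"])
    show "\<forall>a\<in>{t \<in> T. P (u + t)}. u + (u + a) = a" by simp
    show "\<forall>a'\<in>{t \<in> T. P t}. u + (u + a') = a'" by simp
    show "(+) u ` {t \<in> T. P (u + t)} \<subseteq> {t \<in> T. P t}"
    proof
      fix x assume "x \<in> (+) u ` {t \<in> T. P (u + t)}"
      then obtain t where "t \<in> T" "P (u + t)" "x = u + t" by blast
      then show "x \<in> {t \<in> T. P t}" using T u by simp
    qed
    show "(+) u ` {t \<in> T. P t} \<subseteq> {t \<in> T. P (u + t)}"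
    proof
      fix x assume "x \<in> (+) u ` {t \<in> T. P t}"
      then obtain t where "t \<in> T" "P t" "x = u + t" by blast
      then show "x \<in> {t \<in> T. P (u + t)}" using T u by simp
    qed
  qed
  then show ?thesis by (rule bij_betw_same_card)
qed

lemma shift_count:
  fixes out :: "'a \<Rightarrow> f2vec"
  assumes fO: "finite \<Omega>" and fT: "finite T"
    and bij: "\<forall>t\<in>T. bij_betw (\<tau> t) \<Omega> \<Omega>"
    and sh: "\<forall>t\<in>T. \<forall>\<omega>\<in>\<Omega>. out (\<tau> t \<omega>) = out \<omega> + t"
    and oT: "\<forall>\<omega>\<in>\<Omega>. out \<omega> \<in> T"
    and T: "\<forall>x\<in>T. \<forall>y\<in>T. x + y \<in> T"
  shows "card T * card {\<omega>\<in>\<Omega>. P (out \<omega>)} = card \<Omega> * card {t\<in>T. P t}"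
proof -
  have each: "card {\<omega>\<in>\<Omega>. P (out \<omega>)} = card {\<omega>\<in>\<Omega>. P (out \<omega> + t)}" if t: "t \<in> T" for t
  proof -
    have b: "bij_betw (\<tau> t) \<Omega> \<Omega>" using bij t by blast
    have inj: "inj_on (\<tau> t) {\<omega>\<in>\<Omega>. P (out \<omega> + t)}"
      by (rule inj_on_subset[OF bij_betw_imp_inj_on[OF b]]) auto
    have "\<tau> t ` {\<omega>\<in>\<Omega>. P (out \<omega> + t)} = {\<omega>\<in>\<Omega>. P (out \<omega>)}"
    proof safe
      fix \<omega> assume w: "\<omega> \<in> \<Omega>" "P (out \<omega> + t)"
      show "\<tau> t \<omega> \<in> \<Omega>" using bij_betwE[OF b] w(1) by blast
      have "out (\<tau> t \<omega>) = out \<omega> + t" using sh t w(1) by blast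
      then show "P (out (\<tau> t \<omega>))" using w(2) by simp
    next
      fix \<omega> assume w: "\<omega> \<in> \<Omega>" "P (out \<omega>)"
      have "\<omega> \<in> \<tau> t ` \<Omega>" using b w(1) by (simp add: bij_betw_def)
      then obtain \<omega>' where w': "\<omega>' \<in> \<Omega>" "\<omega> = \<tau> t \<omega>'" by blast
      have "out \<omega> = out \<omega>' + t" using sh t w' by blast
      then have "P (out \<omega>' + t)" using w(2) by simp
      then show "\<omega> \<in> \<tau> t ` {\<omega> \<in> \<Omega>. P (out \<omega> + t)}" using w' by blast
    qed
    then show ?thesis using card_image[OF inj] by simp
  qed
  have "(\<Sum>t\<in>T. card {\<omega>\<in>\<Omega>. P (out \<omega> + t)}) = (\<Sum>t\<in>T. card {\<omega>\<in>\<Omega>. P (out \<omega>)})"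
    by (rule sum.cong[OF refl]) (rule each[symmetric])
  then have "card T * card {\<omega>\<in>\<Omega>. P (out \<omega>)} = (\<Sum>t\<in>T. card {\<omega>\<in>\<Omega>. P (out \<omega> + t)})"
    by simp
  also have "\<dots> = (\<Sum>t\<in>T. \<Sum>\<omega>\<in>\<Omega>. if P (out \<omega> + t) then 1 else 0)"
    using fO by (simp add: card_filter_sum)
  also have "\<dots> = (\<Sum>\<omega>\<in>\<Omega>. \<Sum>t\<in>T. if P (out \<omega> + t) then 1 else 0)"
    by (rule sum.swap)
  also have "\<dots> = (\<Sum>\<omega>\<in>\<Omega>. card {t\<in>T. P (out \<omega> + t)})"
    using fT by (simp add: card_filter_sum)
  also have "\<dots> = (\<Sum>\<omega>\<in>\<Omega>. card {t\<in>T. P t})"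
  proof (rule sum.cong[OF refl])
    fix \<omega> assume "\<omega> \<in> \<Omega>"
    then have "out \<omega> \<in> T" using oT by blast
    then show "card {t\<in>T. P (out \<omega> + t)} = card {t\<in>T. P t}" by (rule card_translate[OF T])
  qed
  finally show ?thesis by simp
qed

definition restr :: "nat set \<Rightarrow> f2vec \<Rightarrow> f2vec" where
  "restr S v = (\<lambda>i. if i \<in> S then v i else 0)"

lemma decomp_sum:
  assumes IJ: "I \<inter> J = {}" "I \<union> J = {..<n}"
  shows "(\<Sum>m\<in>f2sub I. card {t \<in> f2sub J. Q (m + t)}) = card {v \<in> f2space n. Q v}"
proof -
  have "finite (I \<union> J)" using IJ(2) by simp
  then have fI: "finite I" and fJ: "finite J" by auto
  have "(\<Sum>m\<in>f2sub I. card {t \<in> f2sub J. Q (m + t)}) = card (SIGMA m:f2sub I. {t \<in> f2sub J. Q (m + t)})"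
    by (rule card_SigmaI[symmetric]) (use fI fJ finite_f2sub in auto)
  also have "\<dots> = card {v \<in> f2space n. Q v}"
  proof (rule bij_betw_same_card)
    have rr: "restr I v + restr J v = v" if v: "v \<in> f2space n" for v
    proof
      fix i
      show "(restr I v + restr J v) i = v i"
      proof (cases "i \<in> I")
        case True then have "i \<notin> J" using IJ by auto
        then show ?thesis using True by (simp add: restr_def)
      next
        case False
        show ?thesis
        proof (cases "i \<in> J")
          case True then show ?thesis using False by (simp add: restr_def)
        next
          case nJ: False
          then have "\<not> i < n" using False IJ(2) by auto
          then show ?thesis using False nJ v by (simp add: restr_def f2space_def)
        qed
      qed
    qed
    have img: "(\<lambda>p. fst p + snd p) ` (SIGMA m:f2sub I. {t \<in> f2sub J. Q (m + t)}) \<subseteq> {v \<in> f2space n. Q v}"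
    proof (rule subsetI)
      fix v assume "v \<in> (\<lambda>p. fst p + snd p) ` (SIGMA m:f2sub I. {t \<in> f2sub J. Q (m + t)})"
      then obtain m t where mt: "m \<in> f2sub I" "t \<in> f2sub J" "Q (m + t)" "v = m + t" by auto
      have "v i = 0" if "n \<le> i" for i
      proof -
        have "i \<notin> I \<union> J" using that IJ(2) by simp
        then have "i \<notin> I" "i \<notin> J" by blast+
        then show ?thesis using mt by (simp add: f2sub_def)
      qed
      then show "v \<in> {v \<in> f2space n. Q v}" using mt by (simp add: f2space_def)
    qed
    show "bij_betw (\<lambda>p. fst p + snd p) (SIGMA m:f2sub I. {t \<in> f2sub J. Q (m + t)}) {v \<in> f2space n. Q v}"
      apply (rule bij_betw_byWitness[where f'="\<lambda>v. (restr I v, restr J v)"])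
      subgoal
      proof
        fix p assume p: "p \<in> (SIGMA m:f2sub I. {t \<in> f2sub J. Q (m + t)})"
        obtain m t where mt: "p = (m, t)" "m \<in> f2sub I" "t \<in> f2sub J" using p by auto
        have "restr I (m + t) = m"
        proof
          fix i show "restr I (m + t) i = m i"
          proof (cases "i \<in> I")
            case True then have "i \<notin> J" using IJ by auto
            then show ?thesis using True mt by (simp add: restr_def f2sub_def)
          next
            case False then show ?thesis using mt by (simp add: restr_def f2sub_def)
          qed
        qed
        moreover have "restr J (m + t) = t"
        proof
          fix i show "restr J (m + t) i = t i"
          proof (cases "i \<in> J")
            case True then have "i \<notin> I" using IJ by auto
            then show ?thesis using True mt by (simp add: restr_def f2sub_def)
          next
            case False then show ?thesis using mt by (simp add: restr_def f2sub_def)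
          qed
        qed
        ultimately show "(restr I (fst p + snd p), restr J (fst p + snd p)) = p" using mt by simp
      qed
      subgoal using rr by simp
      subgoal using img by simp
      subgoal
      proof
        fix w assume "w \<in> (\<lambda>v. (restr I v, restr J v)) ` {v \<in> f2space n. Q v}"
        then obtain v where v: "v \<in> f2space n" "Q v" "w = (restr I v, restr J v)" by blast
        have "restr I v \<in> f2sub I" "restr J v \<in> f2sub J" by (auto simp: restr_def f2sub_def)
        moreover have "Q (restr I v + restr J v)" using rr[OF v(1)] v(2) by simp
        ultimately show "w \<in> (SIGMA m:f2sub I. {t \<in> f2sub J. Q (m + t)})" using v(3) by simp
      qed
      done
  qed
  finally show ?thesis .
qed

lemma three_bound:
  fixes T X c V :: nat
  assumes "T * X \<le> c * V" "3 * V < T" "0 < c"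
  shows "3 * X < c"
proof -
  have "T * (3 * X) \<le> c * (3 * V)" using assms(1) by simp
  also have "\<dots> < c * T" using assms(2,3) by simp
  finally have "T * (3 * X) < T * c" by (simp add: mult.commute)
  then show ?thesis by simp
qed

lemma gspace_memD:
  "g \<in> gspace n r a \<Longrightarrow> j < a \<Longrightarrow> g j \<in> (if j < r then f2sub {r..<n} else f2space n)"
  unfolding gspace_def PiE_iff by blast

lemma gspace_undef:
  "g \<in> gspace n r a \<Longrightarrow> \<not> j < a \<Longrightarrow> g j = undefined"
  unfolding gspace_def PiE_iff extensional_def by blast

lemma gspace_memI:
  assumes "\<And>j. j < a \<Longrightarrow> g j \<in> (if j < r then f2sub {r..<n} else f2space n)"
    and "\<And>j. \<not> j < a \<Longrightarrow> g j = undefined"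
  shows "g \<in> gspace n r a"
  unfolding gspace_def PiE_iff extensional_def using assms by auto

lemma upd_in_gspace:
  assumes g: "g \<in> gspace n r a" and j0: "j0 < a" and t: "g j0 + t \<in> (if j0 < r then f2sub {r..<n} else f2space n)"
  shows "g(j0 := g j0 + t) \<in> gspace n r a"
proof (rule gspace_memI)
  fix j assume "j < a"
  then show "(g(j0 := g j0 + t)) j \<in> (if j < r then f2sub {r..<n} else f2space n)"
    using gspace_memD[OF g] t by (cases "j = j0") auto
next
  fix j assume "\<not> j < a"
  then show "(g(j0 := g j0 + t)) j = undefined" using gspace_undef[OF g] j0 by auto
qed

lemma upd_invol: "(g(j0 := g j0 + t))(j0 := (g(j0 := g j0 + t)) j0 + t) = (g :: nat \<Rightarrow> f2vec)"
  by (simp add: add.assoc)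

lemma enc_upd:
  assumes "m j0 = 1"
  shows "enc r a (g(j0 := g j0 + t)) m = enc r a g m + (if j0 < a then t else 0)"
proof -
  define g' where "g' = g(j0 := g j0 + t)"
  have "enc r a g' m i = (enc r a g m + (if j0 < a then t else 0)) i" for i
  proof -
    have "\<And>j. m j * Gv r g' j i = m j * Gv r g j i + (if j = j0 then t i else 0)"
      using assms by (auto simp: Gv_def g'_def algebra_simps)
    then have "enc r a g' m i = (\<Sum>j<a. m j * Gv r g j i + (if j = j0 then t i else 0))"
      by (simp add: enc_def)
    also have "\<dots> = enc r a g m i + (\<Sum>j<a. if j = j0 then t i else 0)"
      by (simp add: sum.distrib enc_def)
    also have "(\<Sum>j<a. if j = j0 then t i else 0) = (if j0 < a then t i else 0)"
      using sum.delta[of "{..<a}" j0 "\<lambda>_. t i"] by simp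
    finally show ?thesis by simp
  qed
  then show ?thesis unfolding g'_def by (rule ext)
qed

definition phi :: "nat \<Rightarrow> (nat \<Rightarrow> f2vec) \<Rightarrow> f2vec \<Rightarrow> f2vec" where
  "phi a g m = (\<lambda>i. \<Sum>j<a. m j * g j i)"

definition psi :: "nat \<Rightarrow> nat \<Rightarrow> (nat \<Rightarrow> f2vec) \<Rightarrow> f2vec \<Rightarrow> f2vec" where
  "psi n r g y = (\<lambda>k. if k < r then dot n y (g k) else 0)"

lemma phi_upd:
  assumes "m j0 = 1" "j0 < a"
  shows "phi a (g(j0 := g j0 + t)) m = phi a g m + t"
proof -
  define g' where "g' = g(j0 := g j0 + t)"
  have "phi a g' m i = (phi a g m + t) i" for i
  proof -
    have "\<And>j. m j * g' j i = m j * g j i + (if j = j0 then t i else 0)"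
      using assms by (auto simp: g'_def algebra_simps)
    then have "phi a g' m i = (\<Sum>j<a. m j * g j i + (if j = j0 then t i else 0))"
      by (simp add: phi_def)
    also have "\<dots> = phi a g m i + (\<Sum>j<a. if j = j0 then t i else 0)"
      by (simp add: sum.distrib phi_def)
    also have "(\<Sum>j<a. if j = j0 then t i else 0) = t i"
      using sum.delta[of "{..<a}" j0 "\<lambda>_. t i"] assms by simp
    finally show ?thesis by simp
  qed
  then show ?thesis unfolding g'_def by (rule ext)
qed

definition tau3 :: "nat \<Rightarrow> nat \<Rightarrow> f2vec \<Rightarrow> (nat \<Rightarrow> f2vec) \<Rightarrow> nat \<Rightarrow> f2vec" where
  "tau3 r i0 t g = (\<lambda>j. if j < r then g j + f2scale (t j) (ev i0) else g j)"

lemma dot_scale_ev: "i0 < n \<Longrightarrow> dot n y (f2scale c (ev i0)) = c * y i0"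
proof -
  assume i0: "i0 < n"
  have "dot n y (f2scale c (ev i0)) = (\<Sum>i<n. (if i = i0 then 1 else 0) * (c * y i))"
    unfolding dot_def f2scale_def ev_def by (rule sum.cong) (auto simp: algebra_simps)
  also have "\<dots> = c * y i0" using i0 by (rule sum_delta_bit)
  finally show ?thesis .
qed

lemma psi_tau3:
  assumes "y i0 = 1" "i0 < n" "t \<in> f2sub {..<r}"
  shows "psi n r (tau3 r i0 t g) y = psi n r g y + t"
proof
  fix k
  show "psi n r (tau3 r i0 t g) y k = (psi n r g y + t) k"
  proof (cases "k < r")
    case True
    have "dot n y (g k + f2scale (t k) (ev i0)) = dot n y (g k) + t k"
      using dot_add_left[of n "g k" "f2scale (t k) (ev i0)" y] dot_comm dot_scale_ev[OF assms(2)] assms(1)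
      by (metis mult.right_neutral)
    then show ?thesis using True by (simp add: psi_def tau3_def)
  next
    case False then show ?thesis using assms(3) by (simp add: psi_def tau3_def f2sub_def)
  qed
qed

lemma tau3_invol: "tau3 r i0 t (tau3 r i0 t g) = g"
  by (simp add: tau3_def fun_eq_iff add.assoc)

lemma tau3_in:
  assumes g: "g \<in> gspace n r a" and ra: "r \<le> a" and i0: "r \<le> i0" "i0 < n"
  shows "tau3 r i0 t g \<in> gspace n r a"
proof -
  have "tau3 r i0 t g j \<in> (if j < r then f2sub {r..<n} else f2space n)" if j: "j < a" for j
  proof (cases "j < r")
    case True
    then have "g j \<in> f2sub {r..<n}" using gspace_memD[OF g j] by simp
    moreover have "f2scale (t j) (ev i0) \<in> f2sub {r..<n}"
      using i0 by (auto simp: f2sub_def f2scale_def ev_def)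
    ultimately show ?thesis using True by (simp add: tau3_def f2sub_add)
  next
    case False
    then show ?thesis using gspace_memD[OF g j] by (simp add: tau3_def)
  qed
  moreover have "tau3 r i0 t g j = undefined" if "\<not> j < a" for j
    using that gspace_undef[OF g that] ra by (simp add: tau3_def)
  ultimately show ?thesis by (rule gspace_memI)
qed

lemma phi_in_R:
  assumes cs: "cs n r a g" and mL: "m \<in> f2sub {..<r}"
  shows "phi a g m \<in> f2sub {r..<n}"
  unfolding f2sub_def mem_Collect_eq
proof (intro allI impI)
  fix i assume i: "i \<notin> {r..<n}"
  have "m j * g j i = 0" if j: "j \<in> {..<a}" for j
  proof (cases "j < r")
    case True
    show ?thesis
    proof (cases "i < r")
      case True then show ?thesis using cs.g_left[OF cs \<open>j < r\<close>] by simp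
    next
      case False then have "n \<le> i" using i by auto
      then show ?thesis using cs.g_high[OF cs] j by simp
    qed
  next
    case False then have "m j = 0" using mL by (simp add: f2sub_def)
    then show ?thesis by simp
  qed
  then show "phi a g m i = 0" unfolding phi_def by (intro sum.neutral) blast
qed

lemma exists_good:
  assumes ra: "r \<le> a" and an: "a \<le> n"
    and h1: "3 * Vn n d < 2 ^ r" and h2: "3 * Vn n d < 2 ^ (n - r)"
    and h3: "3 * (2 ^ a * Vn n d) < 2 ^ n"
  shows "\<exists>g \<in> gspace n r a. good n r a d g"
proof (rule ccontr)
  assume nex: "\<not> (\<exists>g \<in> gspace n r a. good n r a d g)"
  define \<Omega> where "\<Omega> = gspace n r a"
  define V where "V = Vn n d"
  define L where "L = f2sub {..<r}"
  define R where "R = f2sub {r..<n}"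
  have finO: "finite \<Omega>" unfolding \<Omega>_def gspace_def
    by (rule finite_PiE) (auto simp: finite_f2sub finite_f2space)
  have z: "(\<lambda>j. if j < a then 0 else undefined) \<in> \<Omega>" unfolding \<Omega>_def
    by (rule gspace_memI) auto
  have cO: "0 < card \<Omega>" using finO z card_gt_0_iff by blast
  have csg: "cs n r a g" if "g \<in> \<Omega>" for g using ra an that by (simp add: cs_def \<Omega>_def)
  define M1 where "M1 = {m \<in> f2space a. \<exists>j. r \<le> j \<and> j < a \<and> m j = 1}"
  define bad1 where "bad1 m = {g\<in>\<Omega>. wt n (enc r a g m) < d}" for m
  define bad2 where "bad2 m = {g\<in>\<Omega>. wt n (m + phi a g m) < d}" for m
  define bad3 where "bad3 y = {g\<in>\<Omega>. wt n (y + psi n r g y) < d}" for y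
  define U1 where "U1 = (\<Union>m\<in>M1. bad1 m)"
  define U2 where "U2 = (\<Union>m\<in>L-{0}. bad2 m)"
  define U3 where "U3 = (\<Union>y\<in>R-{0}. bad3 y)"
  have cover: "\<Omega> \<subseteq> U1 \<union> U2 \<union> U3"
  proof
    fix g assume g: "g \<in> \<Omega>"
    interpret cs n r a g by (rule csg[OF g])
    have ng: "\<not> good n r a d g" using nex g \<Omega>_def by blast
    then consider (A) m where "m \<in> f2space a" "m \<noteq> 0" "wt n (enc r a g m) < d"
      | (B) z where "z \<in> Bset n r g" "z \<noteq> 0" "wt n z < d"
      unfolding good_def by (meson not_le)
    then show "g \<in> U1 \<union> U2 \<union> U3"
    proof cases
      case (A m)
      show ?thesis
      proof (cases "\<exists>j. r \<le> j \<and> j < a \<and> m j = 1")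
        case True then have "m \<in> M1" using A by (simp add: M1_def)
        then have "g \<in> U1" using A g unfolding U1_def bad1_def by blast
        then show ?thesis by blast
      next
        case False
        have mL: "m \<in> L"
          unfolding L_def f2sub_def mem_Collect_eq
        proof (intro allI impI)
          fix i assume i: "i \<notin> {..<r}"
          show "m i = 0"
          proof (cases "i < a")
            case True then show ?thesis using False i bit_cases2[of "m i"] by auto
          next
            case False then show ?thesis using A(1) by (simp add: f2space_def)
          qed
        qed
        have "enc r a g m = m + phi a g m"
        proof
          fix i
          have "(if i < r then m i else 0) = m i" using mL by (auto simp: L_def f2sub_def)
          then show "enc r a g m i = (m + phi a g m) i" by (simp add: enc_apply phi_def)
        qed
        then have "g \<in> bad2 m" using A g by (simp add: bad2_def)
        then have "g \<in> U2" using mL A(2) unfolding U2_def by blast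
        then show ?thesis by blast
      qed
    next
      case (B z)
      define y where "y = (\<lambda>i. if r \<le> i then z i else 0)"
      have zB: "z \<in> f2space n" "\<forall>j<r. z j = dot n z (g j)" using B(1) by (auto simp: Bset_def)
      have yR: "y \<in> R" using zB(1) by (auto simp: R_def y_def f2sub_def f2space_def)
      have dz: "dot n z (g k) = dot n y (g k)" if "k < r" for k
        unfolding dot_def y_def using g_left[OF that] by (intro sum.cong) auto
      have zy: "z = y + psi n r g y"
      proof
        fix k show "z k = (y + psi n r g y) k"
        proof (cases "k < r")
          case True then show ?thesis using zB(2) dz[OF True] by (simp add: y_def psi_def)
        next
          case False then show ?thesis by (simp add: y_def psi_def)
        qed
      qed
      have "y \<noteq> 0"
      proof
        assume "y = 0"
        have "psi n r g 0 = 0" by (simp add: psi_def fun_eq_iff)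
        then have "psi n r g y = 0" using \<open>y = 0\<close> by simp
        then show False using zy \<open>y = 0\<close> B(2) by simp
      qed
      have "g \<in> bad3 y" using B(3) zy g by (simp add: bad3_def)
      then have "g \<in> U3" using yR \<open>y \<noteq> 0\<close> unfolding U3_def by blast
      then show ?thesis by blast
    qed
  qed
  have c1: "2 ^ n * card (bad1 m) = card \<Omega> * V" if m: "m \<in> M1" for m
  proof -
    obtain j0 where j0: "r \<le> j0" "j0 < a" "m j0 = 1" using m by (auto simp: M1_def)
    have "card (f2space n) * card {g\<in>\<Omega>. wt n (enc r a g m) < d} = card \<Omega> * card {t\<in>f2space n. wt n t < d}"
    proof (rule shift_count[where \<tau>="\<lambda>t g. g(j0 := g j0 + t)"])
      show "finite \<Omega>" by (rule finO)
      show "finite (f2space n)" by (rule finite_f2space)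
      show "\<forall>t\<in>f2space n. bij_betw (\<lambda>g. g(j0 := g j0 + t)) \<Omega> \<Omega>"
      proof
        fix t assume t: "t \<in> f2space n"
        show "bij_betw (\<lambda>g. g(j0 := g j0 + t)) \<Omega> \<Omega>"
        proof (rule involution_bij)
          show "\<forall>x\<in>\<Omega>. x(j0 := x j0 + t) \<in> \<Omega>"
          proof
            fix x assume x: "x \<in> \<Omega>"
            have "x j0 \<in> f2space n" using gspace_memD[of x n r a j0] x j0 by (simp add: \<Omega>_def)
            then have "x j0 + t \<in> (if j0 < r then f2sub {r..<n} else f2space n)"
              using j0 t f2space_add by auto
            then show "x(j0 := x j0 + t) \<in> \<Omega>" using upd_in_gspace x j0 by (simp add: \<Omega>_def)
          qed
          show "\<forall>x\<in>\<Omega>. (x(j0 := x j0 + t))(j0 := (x(j0 := x j0 + t)) j0 + t) = x"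
            using upd_invol by blast
        qed
      qed
      show "\<forall>t\<in>f2space n. \<forall>w\<in>\<Omega>. enc r a (w(j0 := w j0 + t)) m = enc r a w m + t"
        using enc_upd[of m j0] j0 by simp
      show "\<forall>w\<in>\<Omega>. enc r a w m \<in> f2space n" using csg cs.enc_space by blast
      show "\<forall>x\<in>f2space n. \<forall>y\<in>f2space n. x + y \<in> f2space n" using f2space_add by blast
    qed
    then show ?thesis by (simp add: card_f2space bad1_def V_def Vn_def)
  qed
  have c2: "2 ^ (n - r) * card (bad2 m) = card \<Omega> * card {t\<in>R. wt n (m + t) < d}" if m: "m \<in> L - {0}" for m
  proof -
    obtain j0 where "m j0 \<noteq> 0" using m by (metis DiffE insertI1 zero_fun_apply ext)
    then have j0: "j0 < r" "m j0 = 1" using m bit_cases2[of "m j0"] by (auto simp: L_def f2sub_def)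
    have j0a: "j0 < a" using j0 ra by simp
    have "card R * card {g\<in>\<Omega>. wt n (m + phi a g m) < d} = card \<Omega> * card {t\<in>R. wt n (m + t) < d}"
    proof (rule shift_count[where \<tau>="\<lambda>t g. g(j0 := g j0 + t)" and out="\<lambda>g. phi a g m" and P="\<lambda>v. wt n (m + v) < d"])
      show "finite \<Omega>" by (rule finO)
      show "finite R" by (simp add: R_def finite_f2sub)
      show "\<forall>t\<in>R. bij_betw (\<lambda>g. g(j0 := g j0 + t)) \<Omega> \<Omega>"
      proof
        fix t assume t: "t \<in> R"
        show "bij_betw (\<lambda>g. g(j0 := g j0 + t)) \<Omega> \<Omega>"
        proof (rule involution_bij)
          show "\<forall>x\<in>\<Omega>. x(j0 := x j0 + t) \<in> \<Omega>"
          proof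
            fix x assume x: "x \<in> \<Omega>"
            have "x j0 \<in> f2sub {r..<n}" using gspace_memD[of x n r a j0] x j0 j0a by (simp add: \<Omega>_def)
            then have "x j0 + t \<in> (if j0 < r then f2sub {r..<n} else f2space n)"
              using j0 t f2sub_add by (auto simp: R_def)
            then show "x(j0 := x j0 + t) \<in> \<Omega>" using upd_in_gspace x j0a by (simp add: \<Omega>_def)
          qed
          show "\<forall>x\<in>\<Omega>. (x(j0 := x j0 + t))(j0 := (x(j0 := x j0 + t)) j0 + t) = x"
            using upd_invol by blast
        qed
      qed
      show "\<forall>t\<in>R. \<forall>w\<in>\<Omega>. phi a (w(j0 := w j0 + t)) m = phi a w m + t"
        using phi_upd[of m j0 a] j0 j0a by simp
      show "\<forall>w\<in>\<Omega>. phi a w m \<in> R" using csg phi_in_R m by (auto simp: R_def L_def)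
      show "\<forall>x\<in>R. \<forall>y\<in>R. x + y \<in> R" using f2sub_add by (auto simp: R_def)
    qed
    moreover have "card R = 2 ^ (n - r)" by (simp add: R_def card_f2sub)
    ultimately show ?thesis by (simp add: bad2_def)
  qed
  have c3: "2 ^ r * card (bad3 y) = card \<Omega> * card {t\<in>L. wt n (y + t) < d}" if y: "y \<in> R - {0}" for y
  proof -
    obtain i0 where "y i0 \<noteq> 0" using y by (metis DiffE insertI1 zero_fun_apply ext)
    then have i0: "r \<le> i0" "i0 < n" "y i0 = 1" using y bit_cases2[of "y i0"] by (auto simp: R_def f2sub_def)
    have "card L * card {g\<in>\<Omega>. wt n (y + psi n r g y) < d} = card \<Omega> * card {t\<in>L. wt n (y + t) < d}"
    proof (rule shift_count[where \<tau>="\<lambda>t g. tau3 r i0 t g" and out="\<lambda>g. psi n r g y" and P="\<lambda>v. wt n (y + v) < d"])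
      show "finite \<Omega>" by (rule finO)
      show "finite L" by (simp add: L_def finite_f2sub)
      show "\<forall>t\<in>L. bij_betw (tau3 r i0 t) \<Omega> \<Omega>"
      proof
        fix t assume t: "t \<in> L"
        show "bij_betw (tau3 r i0 t) \<Omega> \<Omega>"
          by (rule involution_bij) (use tau3_in[of _ n r a i0 t] tau3_invol ra i0 in \<open>auto simp: \<Omega>_def\<close>)
      qed
      show "\<forall>t\<in>L. \<forall>w\<in>\<Omega>. psi n r (tau3 r i0 t w) y = psi n r w y + t"
        using psi_tau3 i0 by (auto simp: L_def)
      show "\<forall>w\<in>\<Omega>. psi n r w y \<in> L" by (auto simp: L_def f2sub_def psi_def)
      show "\<forall>x\<in>L. \<forall>y\<in>L. x + y \<in> L" using f2sub_add by (auto simp: L_def)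
    qed
    moreover have "card L = 2 ^ r" by (simp add: L_def card_f2sub)
    ultimately show ?thesis by (simp add: bad3_def)
  qed
  have finM1: "finite M1" using finite_f2space[of a] by (auto simp: M1_def)
  have finL: "finite L" and finR: "finite R" by (simp_all add: L_def R_def finite_f2sub)
  have s1: "2 ^ n * card U1 \<le> card \<Omega> * (2 ^ a * V)"
  proof -
    have "card U1 \<le> (\<Sum>m\<in>M1. card (bad1 m))" unfolding U1_def by (rule card_UN_le[OF finM1])
    then have "2 ^ n * card U1 \<le> (\<Sum>m\<in>M1. 2 ^ n * card (bad1 m))" by (subst sum_distrib_left[symmetric]) (rule mult_le_mono2)
    also have "\<dots> = (\<Sum>m\<in>M1. card \<Omega> * V)" using c1 by (intro sum.cong) auto
    also have "\<dots> = card M1 * (card \<Omega> * V)" by simp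
    also have "card M1 \<le> 2 ^ a"
      using card_mono[OF finite_f2space, of M1 a] card_f2space[of a] by (auto simp: M1_def)
    then have "card M1 * (card \<Omega> * V) \<le> 2 ^ a * (card \<Omega> * V)" by (rule mult_right_mono) simp
    finally show ?thesis by (simp add: ac_simps)
  qed
  have s2: "2 ^ (n - r) * card U2 \<le> card \<Omega> * V"
  proof -
    have "card U2 \<le> (\<Sum>m\<in>L-{0}. card (bad2 m))" unfolding U2_def by (rule card_UN_le) (simp add: finL)
    then have "2 ^ (n - r) * card U2 \<le> (\<Sum>m\<in>L-{0}. 2 ^ (n - r) * card (bad2 m))" by (subst sum_distrib_left[symmetric]) (rule mult_le_mono2)
    also have "\<dots> = (\<Sum>m\<in>L-{0}. card \<Omega> * card {t\<in>R. wt n (m + t) < d})" using c2 by (intro sum.cong) auto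
    also have "\<dots> \<le> (\<Sum>m\<in>L. card \<Omega> * card {t\<in>R. wt n (m + t) < d})"
      by (rule sum_mono2) (auto simp: finL)
    also have "\<dots> = card \<Omega> * (\<Sum>m\<in>L. card {t\<in>R. wt n (m + t) < d})" by (simp add: sum_distrib_left)
    also have "(\<Sum>m\<in>L. card {t\<in>R. wt n (m + t) < d}) = V"
      unfolding L_def R_def V_def Vn_def using ra an by (intro decomp_sum) auto
    finally show ?thesis .
  qed
  have s3: "2 ^ r * card U3 \<le> card \<Omega> * V"
  proof -
    have "card U3 \<le> (\<Sum>y\<in>R-{0}. card (bad3 y))" unfolding U3_def by (rule card_UN_le) (simp add: finR)
    then have "2 ^ r * card U3 \<le> (\<Sum>y\<in>R-{0}. 2 ^ r * card (bad3 y))" by (subst sum_distrib_left[symmetric]) (rule mult_le_mono2)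
    also have "\<dots> = (\<Sum>y\<in>R-{0}. card \<Omega> * card {t\<in>L. wt n (y + t) < d})" using c3 by (intro sum.cong) auto
    also have "\<dots> \<le> (\<Sum>y\<in>R. card \<Omega> * card {t\<in>L. wt n (y + t) < d})"
      by (rule sum_mono2) (auto simp: finR)
    also have "\<dots> = card \<Omega> * (\<Sum>y\<in>R. card {t\<in>L. wt n (y + t) < d})" by (simp add: sum_distrib_left)
    also have "(\<Sum>y\<in>R. card {t\<in>L. wt n (y + t) < d}) = V"
      unfolding L_def R_def V_def Vn_def using ra an by (intro decomp_sum) auto
    finally show ?thesis .
  qed
  have t1: "3 * card U1 < card \<Omega>" using three_bound[OF s1 _ cO] h3 by (simp add: V_def)
  have t2: "3 * card U2 < card \<Omega>" using three_bound[OF s2 _ cO] h2 by (simp add: V_def)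
  have t3: "3 * card U3 < card \<Omega>" using three_bound[OF s3 _ cO] h1 by (simp add: V_def)
  have "U1 \<union> U2 \<union> U3 \<subseteq> \<Omega>" by (auto simp: U1_def U2_def U3_def bad1_def bad2_def bad3_def)
  then have fU: "finite (U1 \<union> U2 \<union> U3)" using finO finite_subset by blast
  have "card \<Omega> \<le> card (U1 \<union> U2 \<union> U3)" using card_mono[OF fU cover] .
  also have "\<dots> \<le> card U1 + card U2 + card U3" by (meson card_Un_le le_trans add_le_mono1)
  finally show False using t1 t2 t3 by linarith
qed

lemma code_exists:
  assumes d: "1 \<le> d" and l: "2 * l < n" and V: "3 * Vn n d < 2 ^ l"
  shows "\<exists>k C. is_stabilizer_code n k C \<and> d \<le> stab_distance n C \<and> n - 2 * l \<le> k"
proof -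
  define a where "a = n - l"
  have la: "l < a" "a \<le> n" using l by (auto simp: a_def)
  have "(2::nat) ^ l \<le> 2 ^ (n - l)" using l by (intro power_increasing) auto
  then have h2: "3 * Vn n d < 2 ^ (n - l)" using V by linarith
  have "3 * (2 ^ a * Vn n d) = 2 ^ a * (3 * Vn n d)" by simp
  also have "\<dots> < 2 ^ a * 2 ^ l" using V by simp
  also have "\<dots> = 2 ^ n" using l by (simp add: a_def power_add[symmetric])
  finally have h3: "3 * (2 ^ a * Vn n d) < 2 ^ n" .
  obtain g where g: "g \<in> gspace n l a" "good n l a d g"
    using exists_good[of l a n d] la V h2 h3 by (auto simp: a_def)
  have cs: "cs n l a g" using la g by (simp add: cs_def)
  have "is_stabilizer_code n (vector_space.dim f2scale (Ccode n l a g) - n) (Ccode n l a g) \<and>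
         d \<le> stab_distance n (Ccode n l a g) \<and> n + (a - l) \<le> vector_space.dim f2scale (Ccode n l a g)"
    using cs.code_ok[OF cs g(2) d la(1)] .
  moreover have "a - l = n - 2 * l" by (simp add: a_def)
  ultimately show ?thesis by (intro exI[of _ "vector_space.dim f2scale (Ccode n l a g) - n"] exI[of _ "Ccode n l a g"]) auto
qed

lemma ln2_ge: "1 / 2 \<le> ln (2::real)"
proof -
  have "ln (1 / 2 :: real) \<le> 1 / 2 - 1" by (rule ln_le_minus_one) simp
  then show ?thesis by (simp add: ln_div)
qed

lemma t_ln_bound:
  fixes t :: real assumes "0 < t" shows "t * (1 - ln t) \<le> 1"
proof -
  have "ln (1 / t) \<le> 1 / t - 1" using assms by (intro ln_le_minus_one) simp
  then have "- ln t \<le> 1 / t - 1" using assms by (simp add: ln_div)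
  then have "t * (- ln t) \<le> t * (1 / t - 1)" using assms by (intro mult_left_mono) auto
  then show ?thesis using assms by (simp add: algebra_simps)
qed

lemma key_bound:
  fixes t x c :: real and m :: nat
  assumes t: "0 < t" and x: "x = 2 ^ m" and c: "c = ln 2"
  shows "t * (1 - ln t) \<le> 2 * m * c * t + 1 / x ^ 2"
proof -
  have xp: "0 < x" using x by simp
  define s where "s = t * x ^ 2"
  have s0: "0 < s" using t xp by (simp add: s_def)
  have lnx: "ln (x ^ 2) = 2 * m * c" using x c by (simp add: ln_realpow)
  have "ln s = ln t + 2 * m * c" using t xp lnx by (simp add: s_def ln_mult)
  then have "t * (1 - ln t) = s * (1 - ln s) / x ^ 2 + 2 * m * c * t"
    using xp by (simp add: s_def field_simps)
  also have "\<dots> \<le> 1 / x ^ 2 + 2 * m * c * t"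
    using t_ln_bound[OF s0] xp by (simp add: divide_right_mono)
  finally show ?thesis by simp
qed

lemma nat_ceil_bounds:
  fixes y :: real assumes "0 \<le> y"
  shows "y \<le> real (nat \<lceil>y\<rceil>)" "real (nat \<lceil>y\<rceil>) \<le> y + 1"
proof -
  have e: "real (nat \<lceil>y\<rceil>) = of_int \<lceil>y\<rceil>" using assms by simp
  show "y \<le> real (nat \<lceil>y\<rceil>)" unfolding e by (rule le_of_int_ceiling)
  show "real (nat \<lceil>y\<rceil>) \<le> y + 1" unfolding e by (rule of_int_ceiling_le_add_one)
qed

theorem proposition4:
  fixes m :: nat and \<delta> :: real
  assumes "m \<ge> 2" and "0 \<le> \<delta>"
    and "\<delta> \<le> 1 / (4 * real m) * (1 - 2 / (2 ^ m - 1))"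
  shows "\<exists>(n :: nat \<Rightarrow> nat) (k :: nat \<Rightarrow> nat) (d :: nat \<Rightarrow> nat) (C :: nat \<Rightarrow> f2vec set).
           (\<forall>i. is_stabilizer_code_nkd (n i) (k i) (d i) (C i)) \<and>
           filterlim n at_top sequentially \<and>
           liminf (\<lambda>i. ereal (real (k i) / real (n i)))
             \<ge> ereal (1 - 2 / (2 ^ m - 1) - 4 * real m * \<delta>) \<and>
           liminf (\<lambda>i. ereal (real (d i) / real (n i))) \<ge> ereal \<delta>"
proof -
  define c where "c = ln (2::real)"
  define x where "x = (2::real) ^ m"
  have c0: "1/2 \<le> c" using ln2_ge by (simp add: c_def)
  have x4: "4 \<le> x"
  proof -
    have "(2::real) ^ 2 \<le> 2 ^ m" using assms(1) by (intro power_increasing) auto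
    then show ?thesis by (simp add: x_def)
  qed
  have m2: "2 \<le> real m" using assms(1) by simp
  define U where "U = c * (1 / (x - 1) + 2 * m * \<delta>)"
  define gap0 where "gap0 = c / (x - 1) - 1 / x ^ 2"
  have xc: "x - 1 < c * x ^ 2"
  proof -
    have a: "x * 4 \<le> x * x" using x4 by (intro mult_left_mono) auto
    have b: "(1/2) * (x * x) \<le> c * (x * x)" using c0 by (intro mult_right_mono) auto
    have "x - 1 < c * (x * x)" using a b x4 by linarith
    then show ?thesis by (simp add: power2_eq_square)
  qed
  have gap_pos: "1 / x ^ 2 < c / (x - 1)"
  proof -
    have "1 / x ^ 2 = (x - 1) / ((x - 1) * x ^ 2)" using x4 by (simp add: field_simps)
    also have "\<dots> < (c * x ^ 2) / ((x - 1) * x ^ 2)" using xc x4 by (intro divide_strict_right_mono) auto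
    also have "\<dots> = c / (x - 1)" using x4 by (simp add: field_simps)
    finally show ?thesis .
  qed
  then have gap0: "0 < gap0" by (simp add: gap0_def)
  define \<epsilon> where "\<epsilon> = gap0 / (4 * m * c)"
  have mc: "0 < 4 * m * c" using m2 c0 by simp
  have eps0: "0 < \<epsilon>" using gap0 mc by (simp add: \<epsilon>_def)
  have mpos: "0 < real m" and cpos: "0 < c" using m2 c0 by auto
  have eps_eq: "2 * m * c * \<epsilon> = gap0 / 2" using mpos cpos by (simp add: \<epsilon>_def field_simps)
  have gap_le: "gap0 \<le> 2 * m * c"
  proof -
    have "c / (x - 1) \<le> c" using x4 c0 by (simp add: divide_le_eq)
    moreover have "c * 1 \<le> c * (2 * m)" using m2 c0 by (intro mult_left_mono) auto
    moreover have "0 \<le> 1 / x ^ 2" by simp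
    moreover have "c * (2 * real m) = 2 * real m * c" by simp
    ultimately show ?thesis unfolding gap0_def by linarith
  qed
  have eps_le: "\<epsilon> \<le> 1 / 2"
  proof -
    have "\<epsilon> \<le> (2 * m * c) / (4 * m * c)" unfolding \<epsilon>_def using gap_le mc by (intro divide_right_mono) auto
    also have "\<dots> = 1 / 2" using mpos cpos by (simp add: field_simps)
    finally show ?thesis .
  qed
  have del_le: "\<delta> \<le> 1 / 2"
  proof -
    have "1 - 2 / (2 ^ m - 1) \<le> (1::real)" using x4 by (simp add: x_def)
    then have "1 / (4 * real m) * (1 - 2 / (2 ^ m - 1)) \<le> 1 / (4 * real m) * 1"
      using m2 by (intro mult_left_mono) auto
    also have "\<dots> \<le> 1 / 2" using m2 by (simp add: divide_le_eq)
    finally show ?thesis using assms(3) by linarith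
  qed
  define \<delta>1 where "\<delta>1 = max \<delta> \<epsilon>"
  have d10: "0 < \<delta>1" using eps0 by (simp add: \<delta>1_def)
  have d1le: "\<delta>1 \<le> 1 / 2" using eps_le del_le by (simp add: \<delta>1_def)
  have d1ge: "\<delta> \<le> \<delta>1" by (simp add: \<delta>1_def)
  define L1 where "L1 = \<delta>1 * (1 - ln \<delta>1)"
  have kb: "L1 \<le> 2 * m * c * \<delta>1 + 1 / x ^ 2"
    unfolding L1_def by (rule key_bound[OF d10 x_def c_def])
  have LU: "L1 < U"
  proof (cases "\<epsilon> \<le> \<delta>")
    case True
    then have "\<delta>1 = \<delta>" by (simp add: \<delta>1_def)
    then show ?thesis using kb gap_pos by (simp add: U_def algebra_simps)
  next
    case False
    then have e: "\<delta>1 = \<epsilon>" by (simp add: \<delta>1_def)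
    have "0 \<le> c * (2 * m * \<delta>)" using c0 assms(2) by simp
    then show ?thesis using kb e eps_eq gap0 by (simp add: U_def gap0_def algebra_simps)
  qed
  define D where "D = U - L1"
  have D0: "0 < D" using LU by (simp add: D_def)
  define K where "K = 1 - ln \<delta>1"
  have K0: "0 < K"
  proof -
    have "ln \<delta>1 < 0" using d10 d1le by simp
    then show ?thesis by (simp add: K_def)
  qed
  have L10: "0 < L1" using d10 K0 by (simp add: L1_def K_def)
  define \<theta> where "\<theta> = (L1 + U) / (2 * c)"
  have th0: "0 < \<theta>" using L10 LU c0 by (simp add: \<theta>_def)
  define R where "R = 1 - 2 / (2 ^ m - 1) - 4 * real m * \<delta>"
  have R_eq: "R = 1 - 2 * U / c" using c0 by (simp add: R_def U_def x_def field_simps)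
  have R0: "0 \<le> R"
  proof -
    have "4 * real m * \<delta> \<le> 4 * real m * (1 / (4 * real m) * (1 - 2 / (2 ^ m - 1)))"
      using assms(3) m2 by (intro mult_left_mono) auto
    also have "\<dots> = 1 - 2 / (2 ^ m - 1)" using m2 by simp
    finally show ?thesis by (simp add: R_def)
  qed
  define N where "N = nat \<lceil>(3 * c + 6 + 2 * K) / D\<rceil> + 1"
  have main: "\<forall>i. \<exists>p. is_stabilizer_code (i + N) (fst p) (snd p) \<and>
      \<delta> * real (i + N) \<le> real (stab_distance (i + N) (snd p)) \<and> R * real (i + N) \<le> real (fst p)"
  proof
    fix i
    define n where "n = i + N"
    have nB: "(3 * c + 6 + 2 * K) / D \<le> real n"
    proof -
      have "0 \<le> (3 * c + 6 + 2 * K) / D" using c0 K0 D0 by simp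
      then have "(3 * c + 6 + 2 * K) / D \<le> real (nat \<lceil>(3 * c + 6 + 2 * K) / D\<rceil>)" by (rule nat_ceil_bounds(1))
      then show ?thesis by (simp add: n_def N_def)
    qed
    have n1: "1 \<le> n" by (simp add: n_def N_def)
    have nD: "3 * c + 6 + 2 * K \<le> real n * D" using nB D0 by (simp add: divide_le_eq mult.commute)
    define dd where "dd = nat \<lceil>\<delta>1 * n\<rceil>"
    define l where "l = nat \<lceil>\<theta> * n\<rceil>"
    have dn0: "0 \<le> \<delta>1 * n" and tn0: "0 \<le> \<theta> * n" using d10 th0 by auto
    have dd_ge: "\<delta>1 * n \<le> real dd" unfolding dd_def by (rule nat_ceil_bounds(1)[OF dn0])
    have dd_le: "real dd \<le> \<delta>1 * n + 1" unfolding dd_def by (rule nat_ceil_bounds(2)[OF dn0])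
    have l_ge: "\<theta> * n \<le> real l" unfolding l_def by (rule nat_ceil_bounds(1)[OF tn0])
    have l_le: "real l \<le> \<theta> * n + 1" unfolding l_def by (rule nat_ceil_bounds(2)[OF tn0])
    have dd1: "1 \<le> dd"
    proof -
      have "0 < \<delta>1 * n" using d10 n1 by simp
      then show ?thesis using dd_ge by linarith
    qed
    have ddn: "dd \<le> n"
    proof -
      have "\<delta>1 * n \<le> 1 * real n" using d1le by (intro mult_right_mono) auto
      then have h: "\<delta>1 * real n \<le> real n" by simp
      show ?thesis unfolding dd_def using h by simp
    qed
    have rate: "R * n + 1 \<le> real n - 2 * real l"
    proof -
      have "2 * real l \<le> 2 * \<theta> * n + 2" using l_le by simp
      also have "2 * \<theta> * n = (L1 + U) * n / c" using c0 by (simp add: \<theta>_def field_simps)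
      finally have a1: "2 * real l \<le> (L1 + U) * n / c + 2" .
      have "3 * c \<le> real n * D" using nD K0 by linarith
      then have h3: "3 \<le> real n * D / c" using cpos by (simp add: le_divide_eq)
      have eq: "real n - (L1 + U) * n / c - 2 - (R * n + 1) = real n * D / c - 3"
        using cpos by (simp add: R_eq D_def field_simps)
      have "R * n + 1 \<le> real n - (L1 + U) * n / c - 2" using h3 eq by linarith
      then show ?thesis using a1 by linarith
    qed
    have l2: "2 * l < n"
    proof -
      have "0 \<le> R * n" using R0 by simp
      then have "2 * real l < real n" using rate by linarith
      then show ?thesis by linarith
    qed
    have Vb: "3 * Vn n dd < 2 ^ l"
    proof -
      have ddp: "0 < real dd" using dd1 by simp
      have "real (Vn n dd) \<le> exp (real dd) * (real n / real dd) ^ dd" by (rule Vn_bound[OF dd1 ddn])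
      also have "(real n / real dd) ^ dd \<le> (1 / \<delta>1) ^ dd"
      proof (rule power_mono)
        show "real n / real dd \<le> 1 / \<delta>1" using dd_ge ddp d10 by (simp add: divide_simps mult.commute)
      qed simp
      also have "(1 / \<delta>1) ^ dd = exp (real dd * (- ln \<delta>1))"
        using d10 by (simp add: exp_of_nat_mult exp_minus ln_inverse[symmetric] inverse_eq_divide)
      also have "exp (real dd) * exp (real dd * (- ln \<delta>1)) = exp (real dd * K)"
        by (simp add: K_def exp_add[symmetric] algebra_simps)
      also have "\<dots> \<le> exp ((\<delta>1 * n + 1) * K)" using dd_le K0 by (intro exp_mono mult_right_mono) auto
      finally have v1: "real (Vn n dd) \<le> exp ((\<delta>1 * n + 1) * K)" by simp
      have ln3: "ln (3::real) \<le> 2" using ln_le_minus_one[of 3] by simp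
      have "ln 3 + (\<delta>1 * n + 1) * K < c * (\<theta> * n)"
      proof -
        have "c * (\<theta> * n) = L1 * n + n * D / 2" using c0 by (simp add: \<theta>_def D_def field_simps)
        moreover have "(\<delta>1 * n + 1) * K = L1 * n + K" by (simp add: L1_def K_def algebra_simps)
        moreover have "3 + K \<le> n * D / 2" using nD c0 by simp
        ultimately show ?thesis using ln3 by linarith
      qed
      also have "c * (\<theta> * n) \<le> c * real l" using l_ge c0 by simp
      finally have "exp (ln 3 + (\<delta>1 * n + 1) * K) < exp (c * real l)" by simp
      then have "3 * exp ((\<delta>1 * n + 1) * K) < exp (real l * c)" by (simp add: exp_add mult.commute)
      also have "exp (real l * c) = 2 ^ l" by (simp add: exp_of_nat_mult c_def)
      finally have "3 * real (Vn n dd) < 2 ^ l" using v1 by linarith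
      then show ?thesis by (metis of_nat_less_iff of_nat_mult of_nat_numeral of_nat_power)
    qed
    obtain k C where kC: "is_stabilizer_code n k C" "dd \<le> stab_distance n C" "n - 2 * l \<le> k"
      using code_exists[OF dd1 l2 Vb] by blast
    have "\<delta> * real n \<le> real (stab_distance n C)"
    proof -
      have "\<delta> * real n \<le> \<delta>1 * real n" using d1ge by (simp add: mult_right_mono)
      also have "\<dots> \<le> real dd" by (rule dd_ge)
      also have "\<dots> \<le> real (stab_distance n C)" using kC(2) by simp
      finally show ?thesis .
    qed
    moreover have "R * real n \<le> real k"
    proof -
      have "real (n - 2 * l) = real n - 2 * real l" using l2 by (simp add: of_nat_diff)
      then have "R * real n \<le> real (n - 2 * l)" using rate by linarith
      also have "\<dots> \<le> real k" using kC(3) by simp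
      finally show ?thesis .
    qed
    ultimately show "\<exists>p. is_stabilizer_code (i + N) (fst p) (snd p) \<and>
      \<delta> * real (i + N) \<le> real (stab_distance (i + N) (snd p)) \<and> R * real (i + N) \<le> real (fst p)"
      using kC(1) by (intro exI[of _ "(k, C)"]) (simp add: n_def)
  qed
  obtain f where f: "\<forall>i. is_stabilizer_code (i + N) (fst (f i)) (snd (f i)) \<and>
      \<delta> * real (i + N) \<le> real (stab_distance (i + N) (snd (f i))) \<and> R * real (i + N) \<le> real (fst (f i))"
    using choice[OF main] by blast
  have P1: "\<forall>i. is_stabilizer_code_nkd (i + N) (fst (f i)) (stab_distance (i + N) (snd (f i))) (snd (f i))"
    using f by (simp add: is_stabilizer_code_nkd_def)
  have P2: "filterlim (\<lambda>i. i + N) at_top sequentially" by (rule filterlim_add_const_nat_at_top)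
  have P3: "liminf (\<lambda>i. ereal (real (fst (f i)) / real (i + N))) \<ge> ereal R"
  proof (rule Liminf_bounded, rule always_eventually, rule allI)
    fix i
    have pos: "0 < real (i + N)" by (simp add: N_def)
    have "R \<le> real (fst (f i)) / real (i + N)" using f pos by (simp add: le_divide_eq)
    then show "ereal R \<le> ereal (real (fst (f i)) / real (i + N))" by simp
  qed
  have P4: "liminf (\<lambda>i. ereal (real (stab_distance (i + N) (snd (f i))) / real (i + N))) \<ge> ereal \<delta>"
  proof (rule Liminf_bounded, rule always_eventually, rule allI)
    fix i
    have pos: "0 < real (i + N)" by (simp add: N_def)
    have "\<delta> \<le> real (stab_distance (i + N) (snd (f i))) / real (i + N)" using f pos by (simp add: le_divide_eq)
    then show "ereal \<delta> \<le> ereal (real (stab_distance (i + N) (snd (f i))) / real (i + N))" by simp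
  qed
  show ?thesis
    apply (rule exI[of _ "\<lambda>i. i + N"], rule exI[of _ "\<lambda>i. fst (f i)"],
           rule exI[of _ "\<lambda>i. stab_distance (i + N) (snd (f i))"], rule exI[of _ "\<lambda>i. snd (f i)"])
    using P1 P2 P3 P4 by (simp add: R_def)
qed


end
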